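(* Let $S$ be a set and $\emptyset\neq\mathcal{E}\subseteq\mathcal{P}(S)$. For every $A \subseteq S$, the set $\{N_{A}\neq 0\}=\{M\in C(S)\mid M\cap A\neq\emptyset\}$ belongs to $\mathfrak{H}(\mathcal{E})$ if and only if $A$ is the union of a countable (possibly empty) family of sets in $\mathcal{E}$.
   Context: $C(S)$ is the set of countable subsets of $S$; $N_A(M)=|A\cap M|$ for $A\subseteq S$, $M\in C(S)$; $\mathfrak{H}(\mathcal{E})=\sigma(\{N_E\neq0\}\mid E\in\mathcal{E})$ is a $\sigma$-field on $C(S)$. *)

theory Defs
  imports "HOL-Analysis.Analysis"
begin

definition countable_subsets :: "'a set \<Rightarrow> 'a set set" where
  "countable_subsets S = {M. M \<subseteq> S \<and> countable M}"

definition hits :: "'a set \<Rightarrow> 'a set \<Rightarrow> 'a set set" where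
  "hits S A = {M \<in> countable_subsets S. M \<inter> A \<noteq> {}}"

definition hit_sigma :: "'a set \<Rightarrow> 'a set set \<Rightarrow> 'a set set set" where
  "hit_sigma S \<E> = sigma_sets (countable_subsets S) ((\<lambda>E. hits S E) ` \<E>)"

end

theory Submission
  imports Defs
begin

definition detd :: "'a set \<Rightarrow> 'a set set \<Rightarrow> 'a set set \<Rightarrow> bool" where
  "detd S X F0 \<longleftrightarrow> (\<forall>M\<in>countable_subsets S. \<forall>M'\<in>countable_subsets S.
      (\<forall>E\<in>F0. (M \<inter> E \<noteq> {}) = (M' \<inter> E \<noteq> {})) \<longrightarrow> (M \<in> X \<longleftrightarrow> M' \<in> X))"

lemma detd_lemma:
  assumes "X \<in> sigma_sets (countable_subsets S) ((\<lambda>E. hits S E) ` \<E>)"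
  shows "\<exists>F0. countable F0 \<and> F0 \<subseteq> \<E> \<and> detd S X F0"
  using assms
proof (induction rule: sigma_sets.induct)
  case (Basic a)
  then obtain E where "E \<in> \<E>" "a = hits S E" by auto
  then show ?case
    by (intro exI[of _ "{E}"]) (auto simp: detd_def hits_def)
next
  case Empty
  then show ?case by (intro exI[of _ "{}"]) (auto simp: detd_def)
next
  case (Compl a)
  then obtain F0 where "countable F0" "F0 \<subseteq> \<E>" "detd S a F0" by auto
  then show ?case
    unfolding detd_def by (intro exI[of _ F0]) blast
next
  case (Union a)
  then have ex: "\<forall>i. \<exists>F0. countable F0 \<and> F0 \<subseteq> \<E> \<and> detd S (a i) F0" by auto
  obtain F where F: "\<And>i. countable (F i) \<and> F i \<subseteq> \<E> \<and> detd S (a i) (F i)"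
    using choice[OF ex] by blast
  show ?case
  proof (intro exI[of _ "\<Union>i. F i"] conjI)
    show "countable (\<Union>i. F i)" using F by auto
    show "(\<Union>i. F i) \<subseteq> \<E>" using F by auto
    show "detd S (\<Union> (range a)) (\<Union>i. F i)"
      unfolding detd_def
    proof (intro ballI impI)
      fix M M' assume M: "M \<in> countable_subsets S" "M' \<in> countable_subsets S"
        and P: "\<forall>E\<in>(\<Union>i. F i). (M \<inter> E \<noteq> {}) = (M' \<inter> E \<noteq> {})"
      have "\<And>i. M \<in> a i \<longleftrightarrow> M' \<in> a i"
      proof -
        fix i
        have "\<forall>E\<in>F i. (M \<inter> E \<noteq> {}) = (M' \<inter> E \<noteq> {})" using P by auto
        then show "M \<in> a i \<longleftrightarrow> M' \<in> a i" using F[of i] M unfolding detd_def by blast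
      qed
      then show "(M \<in> \<Union> (range a)) = (M' \<in> \<Union> (range a))" by auto
    qed
  qed
qed

theorem theorem3p3:
  fixes S :: "'a set" and \<E> :: "'a set set" and A :: "'a set"
  assumes "\<E> \<noteq> {}" and "\<E> \<subseteq> Pow S" and "A \<subseteq> S"
  shows "hits S A \<in> hit_sigma S \<E> \<longleftrightarrow>
         (\<exists>\<F>. countable \<F> \<and> \<F> \<subseteq> \<E> \<and> A = \<Union>\<F>)"
proof
  assume h: "hits S A \<in> hit_sigma S \<E>"
  then obtain F0 where F0: "countable F0" "F0 \<subseteq> \<E>" "detd S (hits S A) F0"
    using detd_lemma unfolding hit_sigma_def by blast
  define F1 where "F1 = {E\<in>F0. E \<subseteq> A}"
  have "A \<subseteq> \<Union>F1"
  proof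
    fix x assume xA: "x \<in> A"
    show "x \<in> \<Union>F1"
    proof (rule ccontr)
      assume nx: "x \<notin> \<Union>F1"
      define g where "g = (\<lambda>E. SOME y. y \<in> E \<and> y \<notin> A)"
      have g: "g E \<in> E \<and> g E \<notin> A" if "E \<in> F0" "x \<in> E" for E
      proof -
        have "\<exists>y. y \<in> E \<and> y \<notin> A" using nx that unfolding F1_def by blast
        then show ?thesis unfolding g_def by (rule someI_ex)
      qed
      define M0 where "M0 = g ` {E\<in>F0. x \<in> E}"
      have M0S: "M0 \<subseteq> S" using g F0(2) assms(2) unfolding M0_def by blast
      have M0c: "countable M0" using F0(1) unfolding M0_def by auto
      have M0A: "M0 \<inter> A = {}" using g unfolding M0_def by auto
      have C0: "M0 \<in> countable_subsets S" using M0S M0c by (simp add: countable_subsets_def)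
      have C1: "insert x M0 \<in> countable_subsets S"
        using M0S M0c xA assms(3) by (auto simp: countable_subsets_def)
      have pat: "\<forall>E\<in>F0. (M0 \<inter> E \<noteq> {}) = (insert x M0 \<inter> E \<noteq> {})"
      proof
        fix E assume E: "E \<in> F0"
        show "(M0 \<inter> E \<noteq> {}) = (insert x M0 \<inter> E \<noteq> {})"
        proof (cases "x \<in> E")
          case True
          then have "g E \<in> M0 \<inter> E" using g[OF E True] E unfolding M0_def by auto
          then show ?thesis by auto
        qed auto
      qed
      have "insert x M0 \<in> hits S A" using C1 xA by (auto simp: hits_def)
      then have "M0 \<in> hits S A" using F0(3) C0 C1 pat unfolding detd_def by blast
      then show False using M0A by (auto simp: hits_def)
    qed
  qed
  moreover have "\<Union>F1 \<subseteq> A" unfolding F1_def by auto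
  ultimately show "\<exists>\<F>. countable \<F> \<and> \<F> \<subseteq> \<E> \<and> A = \<Union>\<F>"
    using F0 by (intro exI[of _ F1]) (auto simp: F1_def intro: countable_subset)
next
  assume "\<exists>\<F>. countable \<F> \<and> \<F> \<subseteq> \<E> \<and> A = \<Union>\<F>"
  then obtain F where F: "countable F" "F \<subseteq> \<E>" "A = \<Union>F" by blast
  show "hits S A \<in> hit_sigma S \<E>"
  proof (cases "F = {}")
    case True
    then have "hits S A = {}" using F by (auto simp: hits_def)
    then show ?thesis unfolding hit_sigma_def by (simp add: sigma_sets.Empty)
  next
    case False
    define f where "f = from_nat_into F"
    have rf: "range f = F" using range_from_nat_into[OF False F(1)] f_def by simp
    have eq: "hits S A = (\<Union>i. hits S (f i))"
      using F(3) rf by (auto simp: hits_def)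
    have "\<And>i. hits S (f i) \<in> hit_sigma S \<E>"
      unfolding hit_sigma_def using rf F(2) by (auto intro!: sigma_sets.Basic)
    then show ?thesis unfolding eq hit_sigma_def by (rule sigma_sets.Union)
  qed
qed

end
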